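(* The kernel $K^{\mathrm{NT}}$ is strictly positive definite on $\mathbb{R}^d$: for any distinct points $x_1,\dots,x_n\in\mathbb{R}^d$, the smallest eigenvalue of the matrix $\big(K^{\mathrm{NT}}(x_i,x_j)\big)_{n\times n}$ is strictly positive.
   Context: Let $\kappa_0(u)=\frac1\pi(\pi-\arccos u)$ and $\kappa_1(u)=\frac1\pi\big[\sqrt{1-u^2}+u(\pi-\arccos u)\big]$ for $u\in[-1,1]$; $\kappa_1^{(r)}$ denotes the $r$-fold composition of $\kappa_1$ ($\kappa_1^{(0)}(u)=u$). Fix an integer $L\ge2$. For $x\in\mathbb{R}^d$ let $\tilde x=(x,1)\in\mathbb{R}^{d+1}$, and for $x,x'\in\mathbb{R}^d$ let $\bar u=\langle\tilde x,\tilde x'\rangle/(\|\tilde x\|\|\tilde x'\|)$. Define $$K^{\mathrm{NT}}(x,x')=\|\tilde x\|\|\tilde x'\|\sum_{r=0}^{L}\kappa_1^{(r)}(\bar u)\prod_{s=r}^{L-1}\kappa_0\big(\kappa_1^{(s)}(\bar u)\big)+1,$$ with an empty product equal to $1$. *)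

theory Defs
  imports Complex_Main "Jordan_Normal_Form.Char_Poly"
begin

definition kappa0 :: "real \<Rightarrow> real" where
  "kappa0 u = (1 / pi) * (pi - arccos u)"

definition kappa1 :: "real \<Rightarrow> real" where
  "kappa1 u = (1 / pi) * (sqrt (1 - u\<^sup>2) + u * (pi - arccos u))"

definition tilde :: "real vec \<Rightarrow> real vec" where
  "tilde x = vec (dim_vec x + 1) (\<lambda>i. if i < dim_vec x then x $ i else 1)"

definition vnorm :: "real vec \<Rightarrow> real" where
  "vnorm v = sqrt (v \<bullet> v)"

definition KNT :: "nat \<Rightarrow> real vec \<Rightarrow> real vec \<Rightarrow> real" where
  "KNT L x x' =
    (let u = (tilde x \<bullet> tilde x') / (vnorm (tilde x) * vnorm (tilde x'))
     in vnorm (tilde x) * vnorm (tilde x') *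
          (\<Sum>r = 0..L. (kappa1 ^^ r) u * (\<Prod>s\<in>{r..<L}. kappa0 ((kappa1 ^^ s) u))) + 1)"

definition gram_NT :: "nat \<Rightarrow> real vec list \<Rightarrow> real mat" where
  "gram_NT L xs = mat (length xs) (length xs) (\<lambda>(i, j). KNT L (xs ! i) (xs ! j))"

end

theory Submission
  imports Defs
begin


definition Q :: "nat \<Rightarrow> (nat \<Rightarrow> nat \<Rightarrow> real) \<Rightarrow> (nat \<Rightarrow> real) \<Rightarrow> real" where
  "Q n M c = (\<Sum>i<n. \<Sum>j<n. c i * c j * M i j)"

definition symk :: "nat \<Rightarrow> (nat \<Rightarrow> nat \<Rightarrow> real) \<Rightarrow> bool" where
  "symk n M = (\<forall>i<n. \<forall>j<n. M i j = M j i)"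

definition psd :: "nat \<Rightarrow> (nat \<Rightarrow> nat \<Rightarrow> real) \<Rightarrow> bool" where
  "psd n M = (symk n M \<and> (\<forall>c. Q n M c \<ge> 0))"

definition Bl :: "nat \<Rightarrow> (nat \<Rightarrow> nat \<Rightarrow> real) \<Rightarrow> (nat \<Rightarrow> real) \<Rightarrow> (nat \<Rightarrow> real) \<Rightarrow> real" where
  "Bl n M c d = (\<Sum>i<n. \<Sum>j<n. c i * d j * M i j)"

lemma Q_add_vec: "Q n M (\<lambda>i. c i + d i) = Q n M c + Bl n M c d + Bl n M d c + Q n M d"
  unfolding Q_def Bl_def by (simp add: algebra_simps sum.distrib)

lemma if0_mult: "(if P then a else 0) * (b::real) = (if P then a * b else 0)"
  "(b::real) * (if P then a else 0) = (if P then b * a else 0)" by auto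

lemma sum_if_const: "(\<Sum>j\<in>S. if P then f j else (0::real)) = (if P then (\<Sum>j\<in>S. f j) else 0)"
  by auto

lemma Bl_unit: "m < n \<Longrightarrow> Bl n M c (\<lambda>i. if i = m then t else 0) = t * (\<Sum>i<n. c i * M i m)"
  unfolding Bl_def by (simp add: sum_distrib_left mult_ac if0_mult sum_if_const)

lemma Bl_unit2: "m < n \<Longrightarrow> Bl n M (\<lambda>i. if i = m then t else 0) c = t * (\<Sum>j<n. c j * M m j)"
  unfolding Bl_def by (simp add: sum_distrib_left mult_ac if0_mult sum_if_const)

lemma Q_unit: "m < n \<Longrightarrow> Q n M (\<lambda>i. if i = m then t else 0) = t^2 * M m m"
  unfolding Q_def by (simp add: power2_eq_square if0_mult sum_if_const)

lemma Q_nonneg_diag: "\<forall>c. Q n M c \<ge> 0 \<Longrightarrow> m < n \<Longrightarrow> M m m \<ge> 0"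
  using Q_unit[of m n M 1] by (metis one_power2 mult_1)

lemma psd_zero_diag_row:
  assumes Qp: "\<forall>c. Q n A c \<ge> 0" and sy: "symk n A" and m: "m < n" and j: "j < n"
    and z: "A m m = 0"
  shows "A m j = 0"
proof (rule ccontr)
  assume nz: "A m j \<noteq> 0"
  then have jm: "j \<noteq> m" using z by auto
  define t where "t = - (A j j + 1) / (2 * A m j)"
  define e where "e = (\<lambda>i. if i = j then (1::real) else 0)"
  define d where "d = (\<lambda>i. if i = m then t else (0::real))"
  have "Q n A (\<lambda>i. e i + d i) = Q n A e + Bl n A e d + Bl n A d e + Q n A d"
    by (rule Q_add_vec)
  also have "Q n A e = A j j" unfolding e_def using Q_unit[OF j, of A 1] by simp
  also have "Q n A d = 0" unfolding d_def using Q_unit[OF m, of A t] z by simp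
  also have "Bl n A e d = t * A j m" unfolding d_def using Bl_unit[OF m] j by (simp add: e_def if0_mult)
  also have "Bl n A d e = t * A m j" unfolding d_def using Bl_unit2[OF m] j by (simp add: e_def if0_mult)
  also have "A j m = A m j" using sy m j unfolding symk_def by auto
  finally have "Q n A (\<lambda>i. e i + d i) = A j j + 2 * t * A m j" by simp
  also have "\<dots> = -1" unfolding t_def using nz by (simp add: field_simps)
  finally show False using Qp by (metis neg_0_le_iff_le not_one_le_zero)
qed

lemma Q_rank1: "Q n (\<lambda>i j. A i j - v i * v j) c = Q n A c - (\<Sum>i<n. c i * v i)^2"
  unfolding Q_def power2_eq_square sum_product
  by (simp add: algebra_simps sum_subtractf)

lemma psd_schur_compl:
  assumes Qp: "\<forall>c. Q n A c \<ge> 0" and sy: "symk n A" and m: "m < n" and a: "A m m > 0"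
  shows "(\<Sum>i<n. c i * A m i)^2 / A m m \<le> Q n A c"
proof -
  define s where "s = (\<Sum>i<n. c i * A m i)"
  define t where "t = - s / A m m"
  define d where "d = (\<lambda>i. if i = m then t else (0::real))"
  have "Q n A (\<lambda>i. c i + d i) = Q n A c + Bl n A c d + Bl n A d c + Q n A d"
    by (rule Q_add_vec)
  also have "Q n A d = t^2 * A m m" unfolding d_def using Q_unit[OF m, of A t] by simp
  also have "Bl n A c d = t * s" unfolding d_def s_def using Bl_unit[OF m] sy m
    unfolding symk_def by (simp add: mult.commute)
  also have "Bl n A d c = t * s" unfolding d_def s_def using Bl_unit2[OF m] by simp
  finally have eq: "Q n A (\<lambda>i. c i + d i) = Q n A c + (2 * (t * s) + t^2 * A m m)" by simp
  have "2 * (t * s) + t^2 * A m m = - (s^2 / A m m)"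
    unfolding t_def using a by (simp add: field_simps power2_eq_square)
  with eq have "Q n A (\<lambda>i. c i + d i) = Q n A c - s^2 / A m m" by simp
  then show ?thesis using Qp[rule_format, of "\<lambda>i. c i + d i"] unfolding s_def by linarith
qed

lemma chol_aux:
  "\<forall>A m. n - m = k \<longrightarrow> symk n A \<longrightarrow> (\<forall>c. Q n A c \<ge> 0) \<longrightarrow>
     (\<forall>i<n. \<forall>j<n. (i < m \<or> j < m) \<longrightarrow> A i j = 0) \<longrightarrow>
     (\<exists>V. \<forall>i<n. \<forall>j<n. A i j = (\<Sum>k\<in>{m..<n}. V k i * V k j))"
proof (induction k)
  case 0
  show ?case by auto
next
  case (Suc k)
  show ?case
  proof (intro allI impI)
    fix A m
    assume nm: "n - m = Suc k" and sy: "symk n A" and Qp: "\<forall>c. Q n A c \<ge> 0"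
      and zr: "\<forall>i<n. \<forall>j<n. (i < m \<or> j < m) \<longrightarrow> A i j = 0"
    have m: "m < n" using nm by auto
    define v where "v = (\<lambda>i. A m i / sqrt (A m m))"
    define A' where "A' = (\<lambda>i j. A i j - v i * v j)"
    have amm: "A m m \<ge> 0" using Q_nonneg_diag[OF Qp m] .
    have sy': "symk n A'" using sy unfolding symk_def A'_def by (simp add: mult.commute)
    have Qp': "\<forall>c. Q n A' c \<ge> 0"
    proof
      fix c
      have "Q n A' c = Q n A c - (\<Sum>i<n. c i * v i)^2" unfolding A'_def by (rule Q_rank1)
      moreover have "(\<Sum>i<n. c i * v i)^2 \<le> Q n A c"
      proof (cases "A m m = 0")
        case True
        then show ?thesis using Qp by (simp add: v_def)
      next
        case False
        then have pos: "A m m > 0" using amm by auto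
        have "(\<Sum>i<n. c i * v i) = (\<Sum>i<n. c i * A m i) / sqrt (A m m)"
          unfolding v_def by (simp add: sum_divide_distrib)
        then have "(\<Sum>i<n. c i * v i)^2 = (\<Sum>i<n. c i * A m i)^2 / A m m"
          using pos by (simp add: power_divide)
        then show ?thesis using psd_schur_compl[OF Qp sy m pos] by simp
      qed
      ultimately show "Q n A' c \<ge> 0" by simp
    qed
    have zr': "\<forall>i<n. \<forall>j<n. (i < Suc m \<or> j < Suc m) \<longrightarrow> A' i j = 0"
    proof (intro allI impI)
      fix i j assume i: "i < n" and j: "j < n" and ij: "i < Suc m \<or> j < Suc m"
      have vz: "v l = 0" if "l < m" "l < n" for l
        using zr that m sy unfolding v_def symk_def by auto
      have row: "A m l - v m * v l = 0" if l: "l < n" for l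
      proof (cases "A m m = 0")
        case True
        then show ?thesis using psd_zero_diag_row[OF Qp sy m l] by (simp add: v_def)
      next
        case False
        then have "A m m > 0" using amm by auto
        then show ?thesis unfolding v_def by (simp add: field_simps)
      qed
      show "A' i j = 0"
      proof (cases "i < m \<or> j < m")
        case True
        then show ?thesis using zr i j vz unfolding A'_def by auto
      next
        case False
        then have "i = m \<or> j = m" using ij by auto
        then show ?thesis
        proof
          assume "i = m" then show ?thesis using row[OF j] unfolding A'_def by simp
        next
          assume "j = m" then show ?thesis using row[OF i] sy i m unfolding A'_def symk_def
            by (metis mult.commute v_def)
        qed
      qed
    qed
    have "n - Suc m = k" using nm by auto
    then obtain V where V: "\<forall>i<n. \<forall>j<n. A' i j = (\<Sum>k\<in>{Suc m..<n}. V k i * V k j)"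
      using Suc.IH sy' Qp' zr' by blast
    define W where "W = (\<lambda>k. if k = m then v else V k)"
    show "\<exists>V. \<forall>i<n. \<forall>j<n. A i j = (\<Sum>k\<in>{m..<n}. V k i * V k j)"
    proof (intro exI allI impI)
      fix i j assume i: "i < n" and j: "j < n"
      have "{m..<n} = insert m {Suc m..<n}" using m by auto
      then have "(\<Sum>k\<in>{m..<n}. W k i * W k j) = v i * v j + (\<Sum>k\<in>{Suc m..<n}. W k i * W k j)"
        by (simp add: W_def)
      also have "(\<Sum>k\<in>{Suc m..<n}. W k i * W k j) = (\<Sum>k\<in>{Suc m..<n}. V k i * V k j)"
        by (rule sum.cong) (auto simp: W_def)
      also have "\<dots> = A' i j" using V i j by auto
      finally show "A i j = (\<Sum>k\<in>{m..<n}. W k i * W k j)" unfolding A'_def by simp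
    qed
  qed
qed

lemma psd_gram:
  assumes "psd n A"
  shows "\<exists>V. \<forall>i<n. \<forall>j<n. A i j = (\<Sum>k<n. V k i * V k j)"
  using chol_aux[of n n, THEN spec[of _ A], THEN spec[of _ 0]] assms unfolding psd_def by (auto simp: atLeast0LessThan)

lemma Q_gram: "(\<forall>i<n. \<forall>j<n. A i j = (\<Sum>k<n. V k i * V k j)) \<Longrightarrow>
   Q n (\<lambda>i j. A i j * B i j) c = (\<Sum>k<n. Q n B (\<lambda>i. c i * V k i))"
proof -
  assume V: "\<forall>i<n. \<forall>j<n. A i j = (\<Sum>k<n. V k i * V k j)"
  have "Q n (\<lambda>i j. A i j * B i j) c = (\<Sum>i<n. \<Sum>j<n. \<Sum>k<n. c i * V k i * (c j * V k j) * B i j)"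
    unfolding Q_def
    by (intro sum.cong refl) (simp add: V sum_distrib_left sum_distrib_right mult_ac)
  also have "\<dots> = (\<Sum>i<n. \<Sum>k<n. \<Sum>j<n. c i * V k i * (c j * V k j) * B i j)"
    by (intro sum.cong refl sum.swap)
  also have "\<dots> = (\<Sum>k<n. \<Sum>i<n. \<Sum>j<n. c i * V k i * (c j * V k j) * B i j)"
    by (rule sum.swap)
  finally show ?thesis unfolding Q_def by simp
qed

lemma schur:
  assumes "psd n A" "psd n B"
  shows "psd n (\<lambda>i j. A i j * B i j)"
proof -
  obtain V where V: "\<forall>i<n. \<forall>j<n. A i j = (\<Sum>k<n. V k i * V k j)" using psd_gram[OF assms(1)] by blast
  show ?thesis unfolding psd_def
  proof
    show "symk n (\<lambda>i j. A i j * B i j)" using assms unfolding psd_def symk_def by auto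
    show "\<forall>c. 0 \<le> Q n (\<lambda>i j. A i j * B i j) c"
      using Q_gram[OF V] assms(2) unfolding psd_def by (simp add: sum_nonneg)
  qed
qed

lemma psd_ones: "psd n (\<lambda>i j. 1)"
proof -
  have "Q n (\<lambda>i j. 1) c = (\<Sum>i<n. c i)^2" for c
    unfolding Q_def power2_eq_square sum_product by simp
  then show ?thesis unfolding psd_def symk_def by simp
qed

lemma psd_hpow: "psd n A \<Longrightarrow> psd n (\<lambda>i j. A i j ^ k)"
proof (induction k)
  case 0
  then show ?case using psd_ones by simp
next
  case (Suc k)
  then show ?case using schur[OF Suc.prems Suc.IH] by simp
qed

lemma Q_series:
  assumes "\<forall>i<n. \<forall>j<n. (\<lambda>k. a k * A i j ^ k) sums F i j"
  shows "(\<lambda>k. a k * Q n (\<lambda>i j. A i j ^ k) c) sums Q n F c"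
proof -
  have "(\<lambda>k. \<Sum>i<n. \<Sum>j<n. c i * c j * (a k * A i j ^ k)) sums (\<Sum>i<n. \<Sum>j<n. c i * c j * F i j)"
    using assms by (intro sums_sum sums_mult) auto
  then show ?thesis unfolding Q_def by (simp add: sum_distrib_left mult_ac)
qed

lemma psd_series:
  assumes A: "psd n A" and a: "\<forall>k. a k \<ge> 0"
    and F: "\<forall>i<n. \<forall>j<n. (\<lambda>k. a k * A i j ^ k) sums F i j"
  shows "psd n F"
  unfolding psd_def
proof
  show "symk n F" unfolding symk_def
  proof (intro allI impI)
    fix i j assume "i < n" "j < n"
    then have "(\<lambda>k. a k * A i j ^ k) sums F i j" "(\<lambda>k. a k * A i j ^ k) sums F j i"
      using F A unfolding psd_def symk_def by auto
    then show "F i j = F j i" using sums_unique2 by blast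
  qed
  show "\<forall>c. 0 \<le> Q n F c"
  proof
    fix c
    have s: "(\<lambda>k. a k * Q n (\<lambda>i j. A i j ^ k) c) sums Q n F c" using Q_series F by blast
    have nn: "\<forall>k. 0 \<le> a k * Q n (\<lambda>i j. A i j ^ k) c"
      using a psd_hpow[OF A] unfolding psd_def by simp
    show "0 \<le> Q n F c" by (rule sums_le[OF _ sums_zero s]) (use nn in auto)
  qed
qed

lemma abs_prod_le: "\<bar>x * y\<bar> \<le> (x^2 + y^2) / (2::real)"
proof -
  have "0 \<le> (\<bar>x\<bar> - \<bar>y\<bar>)^2" by simp
  then show ?thesis by (simp add: abs_mult power2_eq_square algebra_simps)
qed

lemma diag_dom:
  assumes d1: "\<forall>i<n. A i i = 1" and off: "\<forall>i<n. \<forall>j<n. i \<noteq> j \<longrightarrow> \<bar>A i j\<bar> \<le> \<delta>"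
    and dl: "\<delta> \<ge> 0"
  shows "Q n A c \<ge> (1 - real n * \<delta>) * (\<Sum>i<n. c i ^ 2)"
proof -
  have tm: "c i * c j * A i j \<ge> (if i = j then c i ^ 2 else 0) - \<delta> * ((c i ^ 2 + c j ^ 2) / 2)"
    if "i < n" "j < n" for i j
  proof (cases "i = j")
    case True
    then show ?thesis using d1 that dl by (simp add: power2_eq_square)
  next
    case False
    have "\<bar>c i * c j * A i j\<bar> = \<bar>c i * c j\<bar> * \<bar>A i j\<bar>" by (simp add: abs_mult)
    also have "\<dots> \<le> ((c i ^ 2 + c j ^ 2) / 2) * \<delta>"
      using off that False abs_prod_le[of "c i" "c j"]
      by (intro mult_mono) auto
    finally show ?thesis using False by (simp add: mult.commute)
  qed
  have "Q n A c \<ge> (\<Sum>i<n. \<Sum>j<n. (if i = j then c i ^ 2 else 0) - \<delta> * ((c i ^ 2 + c j ^ 2) / 2))"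
    unfolding Q_def using tm by (intro sum_mono) auto
  also have "(\<Sum>i<n. \<Sum>j<n. (if i = j then c i ^ 2 else 0) - \<delta> * ((c i ^ 2 + c j ^ 2) / 2))
     = (\<Sum>i<n. c i ^ 2) - \<delta> / 2 * (\<Sum>i<n. \<Sum>j<n. c i ^ 2 + c j ^ 2)"
    by (simp add: sum_subtractf sum_distrib_left)
  also have "(\<Sum>i<n. \<Sum>j<n. c i ^ 2 + c j ^ 2) = 2 * real n * (\<Sum>i<n. c i ^ 2)"
    by (simp add: sum.distrib sum_distrib_left sum.swap[of "\<lambda>i j. c j ^ 2"] sum_distrib_right mult_ac)
  finally show ?thesis by (simp add: algebra_simps)
qed

definition spd :: "nat \<Rightarrow> (nat \<Rightarrow> nat \<Rightarrow> real) \<Rightarrow> real \<Rightarrow> bool" where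
  "spd n M e = (\<forall>c. Q n M c \<ge> e * (\<Sum>i<n. c i ^ 2))"

lemma spd_series:
  assumes A: "psd n A" and d1: "\<forall>i<n. A i i = 1"
    and off: "\<forall>i<n. \<forall>j<n. i \<noteq> j \<longrightarrow> \<bar>A i j\<bar> < 1"
    and a: "\<forall>k. a k \<ge> 0" and inf: "\<forall>N. \<exists>k\<ge>N. a k > 0"
    and F: "\<forall>i<n. \<forall>j<n. (\<lambda>k. a k * A i j ^ k) sums F i j"
  shows "\<exists>e>0. spd n F e"
proof -
  define S where "S = (\<lambda>(i,j). \<bar>A i j\<bar>) ` {p. fst p < n \<and> snd p < n \<and> fst p \<noteq> snd p}"
  have finS: "finite S" unfolding S_def
    by (rule finite_imageI, rule finite_subset[of _ "{..<n} \<times> {..<n}"]) auto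
  define r where "r = Max (insert 0 S)"
  have r0: "r \<ge> 0" unfolding r_def using finS by simp
  have r1: "r < 1" unfolding r_def using finS off by (auto simp: S_def)
  have offr: "\<bar>A i j\<bar> \<le> r" if "i < n" "j < n" "i \<noteq> j" for i j
    unfolding r_def using finS that by (intro Max_ge) (auto simp: S_def image_iff)
  have "(\<lambda>k. r ^ k) \<longlonglongrightarrow> 0" using r0 r1 by (intro LIMSEQ_power_zero) auto
  moreover have "(0::real) < 1 / (2 * (real n + 1))" by simp
  ultimately have "\<forall>\<^sub>F k in sequentially. r ^ k < 1 / (2 * (real n + 1))"
    by (rule order_tendstoD)
  then obtain N where N: "\<forall>k\<ge>N. r ^ k < 1 / (2 * (real n + 1))"
    unfolding eventually_sequentially by blast
  obtain K where K: "K \<ge> N" "a K > 0" using inf by blast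
  have rK: "r ^ K * real n \<le> 1/2"
  proof -
    have "r ^ K * (2 * (real n + 1)) < 1" using N K by (simp add: field_simps)
    moreover have "r ^ K \<ge> 0" using r0 by simp
    ultimately show ?thesis by (simp add: algebra_simps)
  qed
  have AK: "Q n (\<lambda>i j. A i j ^ K) c \<ge> (1/2) * (\<Sum>i<n. c i ^ 2)" for c
  proof -
    have "Q n (\<lambda>i j. A i j ^ K) c \<ge> (1 - real n * r ^ K) * (\<Sum>i<n. c i ^ 2)"
    proof (rule diag_dom)
      show "\<forall>i<n. A i i ^ K = 1" using d1 by simp
      show "\<forall>i<n. \<forall>j<n. i \<noteq> j \<longrightarrow> \<bar>A i j ^ K\<bar> \<le> r ^ K"
        using offr by (auto simp: power_abs intro: power_mono)
      show "0 \<le> r ^ K" using r0 by simp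
    qed
    moreover have "(1/2) * (\<Sum>i<n. c i ^ 2) \<le> (1 - real n * r ^ K) * (\<Sum>i<n. c i ^ 2)"
      using rK by (intro mult_right_mono) (auto simp: sum_nonneg mult.commute)
    ultimately show ?thesis by linarith
  qed
  have "spd n F (a K / 2)" unfolding spd_def
  proof
    fix c
    have s: "(\<lambda>k. a k * Q n (\<lambda>i j. A i j ^ k) c) sums Q n F c" using Q_series F by blast
    have nn: "\<forall>k. 0 \<le> a k * Q n (\<lambda>i j. A i j ^ k) c"
      using a psd_hpow[OF A] unfolding psd_def by simp
    have "(\<Sum>k\<in>{K}. a k * Q n (\<lambda>i j. A i j ^ k) c) \<le> (\<Sum>k. a k * Q n (\<lambda>i j. A i j ^ k) c)"
      using nn s by (intro sum_le_suminf) (auto simp: sums_iff)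
    then have "a K * Q n (\<lambda>i j. A i j ^ K) c \<le> Q n F c" using s by (simp add: sums_iff)
    moreover have "a K * ((1/2) * (\<Sum>i<n. c i ^ 2)) \<le> a K * Q n (\<lambda>i j. A i j ^ K) c"
      using AK K by (intro mult_left_mono) auto
    ultimately show "a K / 2 * (\<Sum>i<n. c i ^ 2) \<le> Q n F c" by simp
  qed
  then show ?thesis using K by (intro exI[of _ "a K / 2"]) auto
qed

lemma Q_addM: "Q n (\<lambda>i j. M i j + N i j) c = Q n M c + Q n N c"
  unfolding Q_def by (simp add: algebra_simps sum.distrib)

lemma Q_diagM: "Q n (\<lambda>i j. if i = j then d i else 0) c = (\<Sum>i<n. c i ^ 2 * d i)"
  unfolding Q_def by (simp add: power2_eq_square mult_ac if0_mult)

lemma schur_strict: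
  assumes A: "psd n A" and d1: "\<forall>i<n. A i i = 1" and B: "symk n B" and sB: "spd n B e"
    and e: "e \<ge> 0"
  shows "spd n (\<lambda>i j. A i j * B i j) e"
proof -
  define B' where "B' = (\<lambda>i j. B i j - (if i = j then e else 0))"
  have QB': "Q n B' c = Q n B c - e * (\<Sum>i<n. c i ^ 2)" for c
  proof -
    have "Q n B c = Q n (\<lambda>i j. B' i j + (if i = j then e else 0)) c" unfolding B'_def by simp
    also have "\<dots> = Q n B' c + e * (\<Sum>i<n. c i ^ 2)"
      by (simp only: Q_addM Q_diagM) (simp add: sum_distrib_left mult_ac)
    finally show ?thesis by simp
  qed
  have pB': "psd n B'" unfolding psd_def
  proof
    show "symk n B'" using B unfolding symk_def B'_def by auto
    show "\<forall>c. 0 \<le> Q n B' c" using sB unfolding spd_def QB' by simp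
  qed
  have pAB': "psd n (\<lambda>i j. A i j * B' i j)" by (rule schur[OF A pB'])
  show ?thesis unfolding spd_def
  proof
    fix c
    have "(\<lambda>i j. A i j * B i j) = (\<lambda>i j. A i j * B' i j + (if i = j then e * A i i else 0))"
      unfolding B'_def by (auto simp: algebra_simps fun_eq_iff)
    then have "Q n (\<lambda>i j. A i j * B i j) c = Q n (\<lambda>i j. A i j * B' i j) c + (\<Sum>i<n. c i ^ 2 * (e * A i i))"
      by (simp only: Q_addM Q_diagM)
    also have "(\<Sum>i<n. c i ^ 2 * (e * A i i)) = e * (\<Sum>i<n. c i ^ 2)"
      using d1 by (simp add: sum_distrib_left mult_ac)
    finally show "e * (\<Sum>i<n. c i ^ 2) \<le> Q n (\<lambda>i j. A i j * B i j) c"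
      using pAB' unfolding psd_def by simp
  qed
qed


definition bc :: "nat \<Rightarrow> real" where
  "bc n = (-1)^n * ((-1/2::real) gchoose n)"

lemma bc_0[simp]: "bc 0 = 1" by (simp add: bc_def)

lemma bc_Suc: "bc (Suc n) = bc n * (2 * real n + 1) / (2 * real n + 2)"
proof -
  have e1: "((-1/2::real) gchoose Suc n) * fact (Suc n) = (\<Prod>i=0..<Suc n. -1/2 - of_nat i)"
    by (rule gbinomial_mult_fact')
  have e2: "((-1/2::real) gchoose n) * fact n = (\<Prod>i=0..<n. -1/2 - of_nat i)"
    by (rule gbinomial_mult_fact')
  have "((-1/2::real) gchoose Suc n) * fact (Suc n) = ((-1/2) gchoose n) * fact n * (-1/2 - real n)"
    unfolding e1 e2 by (simp add: prod.atLeast0_lessThan_Suc)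
  moreover have "fact (Suc n) = (real n + 1) * (fact n::real)" by simp
  ultimately have "(((-1/2::real) gchoose Suc n) * (real n + 1)) * fact n = (((-1/2) gchoose n) * (-1/2 - real n)) * fact n"
    by (simp add: algebra_simps)
  then have "((-1/2::real) gchoose Suc n) * (real n + 1) = ((-1/2) gchoose n) * (-1/2 - real n)"
    using fact_nonzero[of n] by (metis mult_right_cancel)
  then have gq: "((-1/2::real) gchoose Suc n) = ((-1/2) gchoose n) * (-1/2 - real n) / (real n + 1)"
    by (simp add: field_simps)
  have fr: "- ((-1/2 - real n) / (real n + 1)) = (2 * real n + 1) / (2 * real n + 2)"
    by (simp add: field_simps)
  have "bc (Suc n) = (-1)^n * ((-1/2) gchoose n) * (- ((-1/2 - real n) / (real n + 1)))"
    unfolding bc_def power_Suc gq by (simp add: field_simps)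
  also have "\<dots> = bc n * ((2 * real n + 1) / (2 * real n + 2))"
    unfolding bc_def by (simp only: fr)
  finally show ?thesis by (simp only: times_divide_eq_right)
qed

lemma bc_pos: "bc n > 0"
  by (induction n) (auto simp: bc_Suc)

lemma bc_le1: "bc n \<le> 1"
proof (induction n)
  case 0 then show ?case by simp
next
  case (Suc n)
  have "bc n * (2 * real n + 1) / (2 * real n + 2) \<le> bc n * 1"
    using bc_pos[of n] by (simp add: field_simps)
  then show ?case using Suc.IH unfolding bc_Suc by linarith
qed

lemma summable_geo_bound:
  fixes z :: real
  assumes "\<And>k. \<bar>c k\<bar> \<le> 1" "\<bar>z\<bar> < 1"
  shows "summable (\<lambda>k. c k * z ^ k)"
proof (rule summable_comparison_test')
  show "summable (\<lambda>k. \<bar>z\<bar> ^ k)" using assms by (simp add: summable_geometric)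
  show "norm (c k * z ^ k) \<le> \<bar>z\<bar> ^ k" for k
    using assms(1)[of k] by (simp add: abs_mult power_abs mult_left_le_one_le)
qed

lemma bc_abs: "\<bar>bc n\<bar> \<le> 1" using bc_pos[of n] bc_le1[of n] by simp

lemma diffs_bc: "2 * diffs bc n = (2 * real n + 1) * bc n"
proof -
  have "diffs bc n = real (Suc n) * bc (Suc n)" by (simp add: diffs_def)
  also have "\<dots> = (real n + 1) * (bc n * (2 * real n + 1) / (2 * real n + 2))" by (simp add: bc_Suc)
  also have "(real n + 1) * (bc n * (2 * real n + 1) / (2 * real n + 2)) = bc n * (2 * real n + 1) / 2"
  proof -
    have "2 * real n + 2 \<noteq> 0" "real n + 1 \<noteq> 0" by simp_all
    then show ?thesis by (simp add: field_simps)
  qed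
  finally show ?thesis by (simp add: algebra_simps)
qed

lemma P_ode:
  fixes t :: real
  assumes t: "\<bar>t\<bar> < 1"
  shows "2 * (1 - t) * (\<Sum>n. diffs bc n * t ^ n) = (\<Sum>n. bc n * t ^ n)"
proof -
  have smd: "summable (\<lambda>n. diffs bc n * t ^ n)"
    by (rule termdiff_converges[of t 1]) (use t bc_abs in \<open>auto intro: summable_geo_bound\<close>)
  define D where "D = (\<Sum>n. diffs bc n * t ^ n)"
  have s1: "(\<lambda>n. (2 * real n + 1) * bc n * t ^ n) sums (2 * D)"
  proof -
    have "(\<lambda>n. 2 * (diffs bc n * t ^ n)) sums (2 * D)" using smd unfolding D_def
      by (intro sums_mult) (simp add: summable_sums)
    then show ?thesis by (simp add: diffs_bc mult.assoc[symmetric])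
  qed
  have s2: "(\<lambda>n. 2 * real n * bc n * t ^ n) sums (2 * t * D)"
  proof -
    have "(\<lambda>n. (2 * t) * (diffs bc n * t ^ n)) sums (2 * t * D)" using smd unfolding D_def
      by (intro sums_mult) (simp add: summable_sums)
    moreover have "(2 * t) * (diffs bc n * t ^ n) = 2 * real (Suc n) * bc (Suc n) * t ^ (Suc n)" for n
      by (simp add: diffs_def)
    ultimately have "(\<lambda>n. 2 * real (Suc n) * bc (Suc n) * t ^ (Suc n)) sums (2 * t * D)" by simp
    from sums_Suc[OF this] show ?thesis by simp
  qed
  have "(\<lambda>n. (2 * real n + 1) * bc n * t ^ n - 2 * real n * bc n * t ^ n) sums (2 * D - 2 * t * D)"
    by (rule sums_diff[OF s1 s2])
  moreover have "(2 * real n + 1) * bc n * t ^ n - 2 * real n * bc n * t ^ n = bc n * t ^ n" for n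
    by (simp add: algebra_simps)
  ultimately have "(\<lambda>n. bc n * t ^ n) sums (2 * D - 2 * t * D)" by simp
  then show ?thesis unfolding D_def by (simp add: sums_iff algebra_simps)
qed

lemma P_closed:
  fixes t :: real
  assumes t: "\<bar>t\<bar> < 1"
  shows "(\<Sum>n. bc n * t ^ n) * sqrt (1 - t) = 1"
proof -
  define P where "P = (\<lambda>x::real. \<Sum>n. bc n * x ^ n)"
  have dP: "(P has_field_derivative (\<Sum>n. diffs bc n * x ^ n)) (at x)" if "\<bar>x\<bar> < 1" for x
    unfolding P_def
    by (rule termdiffs_strong'[of 1]) (use that bc_abs in \<open>auto intro: summable_geo_bound\<close>)
  have "(\<lambda>x. P x * sqrt (1 - x)) t = (\<lambda>x. P x * sqrt (1 - x)) 0"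
  proof (rule DERIV_isconst3[of "-1" 1 t 0 "\<lambda>x. P x * sqrt (1 - x)"])
    show "-1 < (1::real)" by simp
    show "t \<in> {-1<..<1}" using t by auto
    show "(0::real) \<in> {-1<..<1}" by simp
    fix x :: real assume x: "x \<in> {-1<..<1}"
    then have xa: "\<bar>x\<bar> < 1" and px: "1 - x > 0" by auto
    have ds: "((\<lambda>x. sqrt (1 - x)) has_field_derivative (inverse (sqrt (1 - x)) / 2 * (- 1))) (at x)"
      using px by (auto intro!: derivative_eq_intros)
    have dd: "((\<lambda>x. P x * sqrt (1 - x)) has_field_derivative
       ((\<Sum>n. diffs bc n * x ^ n) * sqrt (1 - x) + (inverse (sqrt (1 - x)) / 2 * (- 1)) * P x)) (at x)"
      by (intro DERIV_mult dP xa ds)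
    moreover have ez: "(\<Sum>n. diffs bc n * x ^ n) * sqrt (1 - x) + (inverse (sqrt (1 - x)) / 2 * (- 1)) * P x = 0"
    proof -
      have e: "2 * (1 - x) * (\<Sum>n. diffs bc n * x ^ n) = P x" using P_ode[OF xa] unfolding P_def .
      define sx where "sx = sqrt (1 - x)"
      define D where "D = (\<Sum>n. diffs bc n * x ^ n)"
      have sxp: "sx > 0" unfolding sx_def using px by simp
      have sq: "sx * sx = 1 - x" unfolding sx_def using px by simp
      have Pe: "P x = 2 * (sx * sx) * D" using e sq unfolding D_def by simp
      have "D * sx + (inverse sx / 2 * (- 1)) * (2 * (sx * sx) * D) = 0"
        using sxp by (simp add: field_simps)
      then show ?thesis using Pe unfolding sx_def D_def by simp
    qed
    show "((\<lambda>x. P x * sqrt (1 - x)) has_field_derivative 0) (at x)" using dd unfolding ez .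
  qed
  moreover have "P 0 = 1" unfolding P_def by simp
  ultimately show ?thesis unfolding P_def by simp
qed

lemma bc_series:
  assumes "\<bar>u\<bar> < 1"
  shows "(\<lambda>n. bc n * u ^ (2*n)) sums inverse (sqrt (1 - u^2))"
proof -
  have t: "\<bar>u^2\<bar> < 1" using assms by (simp add: abs_square_less_1)
  have "summable (\<lambda>n. bc n * (u^2) ^ n)" using t bc_abs by (intro summable_geo_bound)
  moreover have "(\<Sum>n. bc n * (u^2) ^ n) = inverse (sqrt (1 - u^2))"
  proof -
    have "sqrt (1 - u^2) > 0" using assms by (simp add: abs_square_less_1)
    then show ?thesis using P_closed[OF t] by (simp add: field_simps)
  qed
  ultimately show ?thesis by (simp add: sums_iff power_mult)
qed

definition sa :: "nat \<Rightarrow> real" where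
  "sa k = (if odd k then bc (k div 2) / real k else 0)"

definition ha :: "nat \<Rightarrow> real" where
  "ha k = (if k = 0 then 1 else if even k then bc (k div 2 - 1) / (real k * (real k - 1)) else 0)"

lemma diffs_sa: "diffs sa k = (if even k then bc (k div 2) else 0)"
  unfolding diffs_def sa_def by auto

lemma diffs_ha: "diffs ha = sa"
proof
  fix k
  show "diffs ha k = sa k"
  proof (cases "even k")
    case True then show ?thesis unfolding diffs_def ha_def sa_def by auto
  next
    case False
    then obtain m where k: "k = 2 * m + 1" using oddE by blast
    have m1: "Suc k div 2 - 1 = m" and m2: "k div 2 = m" using k by auto
    have "diffs ha k = real (Suc k) * ha (Suc k)" by (simp add: diffs_def)
    also have "ha (Suc k) = bc m / (real (Suc k) * real k)"
      using False m1 unfolding ha_def by simp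
    also have "real (Suc k) * (bc m / (real (Suc k) * real k)) = bc m / real k"
      by (simp del: of_nat_Suc)
    also have "\<dots> = sa k" using False m2 by (simp add: sa_def)
    finally show ?thesis .
  qed
qed

lemma sa_bound: "\<bar>sa k\<bar> \<le> 1"
proof -
  have "bc (k div 2) / real k \<le> 1" if "odd k"
  proof -
    have "real k \<ge> 1" using that by (cases k) auto
    then have "bc (k div 2) / real k \<le> bc (k div 2)" using bc_pos[of "k div 2"]
      by (simp add: divide_le_eq mult_le_cancel_left1)
    then show ?thesis using bc_le1 order_trans by blast
  qed
  then show ?thesis unfolding sa_def using bc_pos[of "k div 2"] by auto
qed

lemma ha_bound: "\<bar>ha k\<bar> \<le> 1"
proof -
  have "bc (k div 2 - 1) / (real k * (real k - 1)) \<le> 1" if ev: "even k" and nz: "k \<noteq> 0"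
  proof -
    from ev obtain m where km: "k = 2 * m" ..
    then have "real k \<ge> 2" using nz by (cases m) auto
    then have "1 * 1 \<le> real k * (real k - 1)" by (intro mult_mono) auto
    then have "real k * (real k - 1) \<ge> 1" by simp
    then have "bc (k div 2 - 1) / (real k * (real k - 1)) \<le> bc (k div 2 - 1)"
      using bc_pos[of "k div 2 - 1"] by (simp add: divide_le_eq mult_le_cancel_left1)
    then show ?thesis using bc_le1 order_trans by blast
  qed
  moreover have "0 \<le> bc (k div 2 - 1) / (real k * (real k - 1))" if ev: "even k" and nz: "k \<noteq> 0"
  proof -
    from ev obtain m where km: "k = 2 * m" ..
    then have "real k \<ge> 2" using nz by (cases m) auto
    then show ?thesis using bc_pos[of "k div 2 - 1"] by simp
  qed
  ultimately show ?thesis unfolding ha_def by auto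
qed

lemma dsa_series:
  assumes "\<bar>u\<bar> < 1"
  shows "(\<lambda>k. diffs sa k * u ^ k) sums inverse (sqrt (1 - u^2))"
proof -
  have "(\<lambda>n. bc n * u ^ (2*n)) sums inverse (sqrt (1 - u^2))" by (rule bc_series[OF assms])
  then have "(\<lambda>n. diffs sa (2*n) * u ^ (2*n)) sums inverse (sqrt (1 - u^2))"
    by (simp add: diffs_sa)
  then show ?thesis
    by (subst (asm) sums_mono_reindex[of "\<lambda>n. 2 * n"])
       (auto simp: strict_mono_def diffs_sa image_iff elim!: evenE)
qed

definition Sf :: "real \<Rightarrow> real" where "Sf u = (\<Sum>k. sa k * u ^ k)"
definition Hf :: "real \<Rightarrow> real" where "Hf u = (\<Sum>k. ha k * u ^ k)"

lemma Sf_deriv: "\<bar>u\<bar> < 1 \<Longrightarrow> (Sf has_field_derivative inverse (sqrt (1 - u^2))) (at u)"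
proof -
  assume u: "\<bar>u\<bar> < 1"
  have "(Sf has_field_derivative (\<Sum>k. diffs sa k * u ^ k)) (at u)"
    unfolding Sf_def
    by (rule termdiffs_strong'[of 1]) (use u sa_bound in \<open>auto intro: summable_geo_bound\<close>)
  then show ?thesis using dsa_series[OF u] by (simp add: sums_iff)
qed

lemma Hf_deriv: "\<bar>u\<bar> < 1 \<Longrightarrow> (Hf has_field_derivative Sf u) (at u)"
proof -
  assume u: "\<bar>u\<bar> < 1"
  have "(Hf has_field_derivative (\<Sum>k. diffs ha k * u ^ k)) (at u)"
    unfolding Hf_def
    by (rule termdiffs_strong'[of 1]) (use u ha_bound in \<open>auto intro: summable_geo_bound\<close>)
  then show ?thesis by (simp add: diffs_ha Sf_def)
qed

lemma Sf_arcsin: "\<bar>u\<bar> < 1 \<Longrightarrow> Sf u = arcsin u"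
proof -
  assume u: "\<bar>u\<bar> < 1"
  have "(\<lambda>x. Sf x - arcsin x) u = (\<lambda>x. Sf x - arcsin x) 0"
  proof (rule DERIV_isconst3[of "-1" 1 u 0])
    show "-1 < (1::real)" by simp
    show "u \<in> {-1<..<1}" using u by auto
    show "(0::real) \<in> {-1<..<1}" by simp
    fix x :: real assume x: "x \<in> {-1<..<1}"
    then have "\<bar>x\<bar> < 1" by auto
    have "((\<lambda>x. Sf x - arcsin x) has_field_derivative
          (inverse (sqrt (1 - x^2)) - inverse (sqrt (1 - x^2)))) (at x)"
      using Sf_deriv[OF \<open>\<bar>x\<bar> < 1\<close>] DERIV_arcsin[of x] x by (intro DERIV_diff) auto
    then show "((\<lambda>x. Sf x - arcsin x) has_field_derivative 0) (at x)" by simp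
  qed
  moreover have "Sf 0 = 0" unfolding Sf_def by (simp add: sa_def)
  ultimately show ?thesis by simp
qed

lemma Hf_eq: "\<bar>u\<bar> < 1 \<Longrightarrow> Hf u = sqrt (1 - u^2) + u * arcsin u"
proof -
  assume u: "\<bar>u\<bar> < 1"
  have "(\<lambda>x. Hf x - (sqrt (1 - x^2) + x * arcsin x)) u = (\<lambda>x. Hf x - (sqrt (1 - x^2) + x * arcsin x)) 0"
  proof (rule DERIV_isconst3[of "-1" 1 u 0])
    show "-1 < (1::real)" by simp
    show "u \<in> {-1<..<1}" using u by auto
    show "(0::real) \<in> {-1<..<1}" by simp
    fix x :: real assume x: "x \<in> {-1<..<1}"
    then have xa: "\<bar>x\<bar> < 1" by auto
    then have px: "1 - x^2 > 0" by (simp add: abs_square_less_1)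
    have d1: "((\<lambda>x. sqrt (1 - x^2)) has_field_derivative (inverse (sqrt (1 - x^2)) / 2 * (- (2 * x)))) (at x)"
      using px by (auto intro!: derivative_eq_intros simp: power2_eq_square)
    have d2: "((\<lambda>x. x * arcsin x) has_field_derivative (arcsin x + x * inverse (sqrt (1 - x^2)))) (at x)"
      using DERIV_arcsin[of x] x by (auto intro!: derivative_eq_intros)
    have "((\<lambda>x. Hf x - (sqrt (1 - x^2) + x * arcsin x)) has_field_derivative
          (Sf x - ((inverse (sqrt (1 - x^2)) / 2 * (- (2 * x))) + (arcsin x + x * inverse (sqrt (1 - x^2)))))) (at x)"
      by (intro DERIV_diff DERIV_add Hf_deriv xa d1 d2)
    moreover have "Sf x - ((inverse (sqrt (1 - x^2)) / 2 * (- (2 * x))) + (arcsin x + x * inverse (sqrt (1 - x^2)))) = 0"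
      using Sf_arcsin[OF xa] by (simp add: field_simps)
    ultimately show "((\<lambda>x. Hf x - (sqrt (1 - x^2) + x * arcsin x)) has_field_derivative 0) (at x)"
      by simp
  qed
  moreover have "Hf 0 = 1" unfolding Hf_def by (simp add: ha_def)
  ultimately show ?thesis by simp
qed

lemma endpoint_sums:
  fixes g :: "real \<Rightarrow> real"
  assumes a: "\<And>k. a k \<ge> 0"
    and ser: "\<And>u. 0 \<le> u \<Longrightarrow> u < 1 \<Longrightarrow> (\<lambda>k. a k * u ^ k) sums g u"
    and cont: "continuous_on {0..1} g"
  shows "a sums g 1"
proof -
  have "(g \<longlongrightarrow> g 1) (at 1 within {0..1})" using cont by (simp add: continuous_on_def)
  then have lim: "(g \<longlongrightarrow> g 1) (at_left 1)" by (simp add: at_within_Icc_at_left)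
  have ev: "eventually (\<lambda>u. u \<in> {0<..<1}) (at_left (1::real))" by (rule eventually_at_left_real) simp
  have part: "(\<Sum>k<N. a k) \<le> g 1" for N
  proof -
    have Plim: "((\<lambda>u. \<Sum>k<N. a k * u ^ k) \<longlongrightarrow> (\<Sum>k<N. a k * 1 ^ k)) (at_left 1)"
      by (intro tendsto_intros)
    have "eventually (\<lambda>u. (\<Sum>k<N. a k * u ^ k) \<le> g u) (at_left 1)"
      using ev
    proof (rule eventually_mono)
      fix u :: real assume u: "u \<in> {0<..<1}"
      then have s: "(\<lambda>k. a k * u ^ k) sums g u" using ser by auto
      have "(\<Sum>k<N. a k * u ^ k) \<le> (\<Sum>k. a k * u ^ k)"
        using s a u by (intro sum_le_suminf) (auto simp: sums_iff)
      then show "(\<Sum>k<N. a k * u ^ k) \<le> g u" using s by (simp add: sums_iff)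
    qed
    from tendsto_le[OF trivial_limit_at_left_real lim Plim this] show ?thesis by simp
  qed
  have "(\<Sum>k\<le>n. a k) \<le> g 1" for n using part[of "Suc n"] by (simp add: lessThan_Suc_atMost)
  then have sm: "summable a" by (rule bounded_imp_summable[OF a])
  have le1: "suminf a \<le> g 1" by (rule suminf_le_const[OF sm part])
  have "eventually (\<lambda>u. g u \<le> suminf a) (at_left 1)"
    using ev
  proof (rule eventually_mono)
    fix u :: real assume u: "u \<in> {0<..<1}"
    then have s: "(\<lambda>k. a k * u ^ k) sums g u" using ser by auto
    have "(\<Sum>k. a k * u ^ k) \<le> suminf a"
      using s sm a u by (intro suminf_le) (auto simp: sums_iff intro!: mult_left_le power_le_one)
    then show "g u \<le> suminf a" using s by (simp add: sums_iff)
  qed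
  from tendsto_le[OF trivial_limit_at_left_real tendsto_const lim this] have "g 1 \<le> suminf a" .
  with le1 sm show ?thesis by (simp add: sums_iff)
qed

lemma sa_nonneg: "sa k \<ge> 0" unfolding sa_def using bc_pos[of "k div 2"] by auto
lemma ha_nonneg: "ha k \<ge> 0"
proof -
  have "real k * (real k - 1) \<ge> 0" by (cases k) auto
  then show ?thesis unfolding ha_def using bc_pos[of "k div 2 - 1"] by auto
qed

lemma arcsin_series:
  assumes "-1 < u" "u \<le> 1"
  shows "(\<lambda>k. sa k * u ^ k) sums arcsin u"
proof -
  have inner: "(\<lambda>k. sa k * u ^ k) sums arcsin u" if "\<bar>u\<bar> < 1" for u
  proof -
    have "summable (\<lambda>k. sa k * u ^ k)" using that sa_bound by (intro summable_geo_bound)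
    then show ?thesis using Sf_arcsin[OF that] unfolding Sf_def by (simp add: sums_iff)
  qed
  show ?thesis
  proof (cases "u = 1")
    case True
    have "sa sums arcsin 1"
      by (rule endpoint_sums[OF sa_nonneg inner])
         (auto intro: continuous_on_subset[OF continuous_on_arcsin'])
    then show ?thesis using True by simp
  next
    case False
    then show ?thesis using assms inner by auto
  qed
qed

lemma Hf_series:
  assumes "-1 < u" "u \<le> 1"
  shows "(\<lambda>k. ha k * u ^ k) sums (sqrt (1 - u^2) + u * arcsin u)"
proof -
  have inner: "(\<lambda>k. ha k * u ^ k) sums (sqrt (1 - u^2) + u * arcsin u)" if "\<bar>u\<bar> < 1" for u
  proof -
    have "summable (\<lambda>k. ha k * u ^ k)" using that ha_bound by (intro summable_geo_bound)
    then show ?thesis using Hf_eq[OF that] unfolding Hf_def by (simp add: sums_iff)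
  qed
  show ?thesis
  proof (cases "u = 1")
    case True
    have c: "continuous_on {0..1} (\<lambda>u::real. sqrt (1 - u^2) + u * arcsin u)"
      by (intro continuous_intros continuous_on_subset[OF continuous_on_arcsin']) auto
    have "ha sums (sqrt (1 - 1^2) + 1 * arcsin 1)"
      by (rule endpoint_sums[OF ha_nonneg inner c]) auto
    then show ?thesis using True by simp
  next
    case False
    then show ?thesis using assms inner by auto
  qed
qed

definition a0 :: "nat \<Rightarrow> real" where "a0 k = (if k = 0 then 1/2 else 0) + sa k / pi"
definition a1 :: "nat \<Rightarrow> real" where "a1 k = (if k = 1 then 1/2 else 0) + ha k / pi"

lemma a0_nonneg: "a0 k \<ge> 0" unfolding a0_def using sa_nonneg[of k] by auto
lemma a1_nonneg: "a1 k \<ge> 0" unfolding a1_def using ha_nonneg[of k] by auto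

lemma a0_inf: "\<exists>k\<ge>N. a0 k > 0"
proof -
  have "a0 (2 * N + 1) > 0" unfolding a0_def sa_def using bc_pos[of N] by simp
  then show ?thesis by (intro exI[of _ "2 * N + 1"]) auto
qed

lemma single_series: fixes c u :: real shows "(\<lambda>k. (if k = i then c else 0) * u ^ k) sums (c * u ^ i)"
proof -
  have "(\<lambda>k. if k = i then (\<lambda>r. c * u ^ r) k else 0) sums ((\<lambda>r. c * u ^ r) i)" by (rule sums_single)
  moreover have "(\<lambda>k. if k = i then (\<lambda>r. c * u ^ r) k else 0) = (\<lambda>k. (if k = i then c else 0) * u ^ k)"
    by (auto simp: fun_eq_iff)
  ultimately show ?thesis by simp
qed

lemma k0_series:
  assumes "-1 < u" "u \<le> 1"
  shows "(\<lambda>k. a0 k * u ^ k) sums ((1 / pi) * (pi - arccos u))"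
proof -
  have S: "(\<lambda>k. (if k = 0 then 1/2 else 0) * u ^ k + (sa k * u ^ k) / pi) sums (1/2 * u ^ 0 + arcsin u / pi)"
    by (intro sums_add sums_divide single_series arcsin_series assms)
  have V: "1/2 * u ^ 0 + arcsin u / pi = (1 / pi) * (pi - arccos u)"
    using assms by (simp add: arccos_arcsin_eq field_simps)
  have F: "(\<lambda>k. a0 k * u ^ k) = (\<lambda>k. (if k = 0 then 1/2 else 0) * u ^ k + (sa k * u ^ k) / pi)"
    by (auto simp: a0_def fun_eq_iff algebra_simps)
  show ?thesis using S V F by metis
qed

lemma k1_series:
  assumes "-1 < u" "u \<le> 1"
  shows "(\<lambda>k. a1 k * u ^ k) sums ((1 / pi) * (sqrt (1 - u\<^sup>2) + u * (pi - arccos u)))"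
proof -
  have S: "(\<lambda>k. (if k = 1 then 1/2 else 0) * u ^ k + (ha k * u ^ k) / pi) sums (1/2 * u ^ 1 + (sqrt (1 - u^2) + u * arcsin u) / pi)"
    by (intro sums_add sums_divide single_series Hf_series assms)
  have V: "1/2 * u ^ 1 + (sqrt (1 - u^2) + u * arcsin u) / pi = (1 / pi) * (sqrt (1 - u\<^sup>2) + u * (pi - arccos u))"
    using assms by (simp add: arccos_arcsin_eq field_simps)
  have F: "(\<lambda>k. a1 k * u ^ k) = (\<lambda>k. (if k = 1 then 1/2 else 0) * u ^ k + (ha k * u ^ k) / pi)"
    by (auto simp: a1_def fun_eq_iff algebra_simps)
  show ?thesis using S V F by metis
qed

definition k1f :: "real \<Rightarrow> real" where
  "k1f u = (1 / pi) * (sqrt (1 - u\<^sup>2) + u * (pi - arccos u))"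

lemma k1f_one: "k1f 1 = 1" unfolding k1f_def by simp

lemma k1f_lt:
  assumes "\<bar>u\<bar> < 1"
  shows "\<bar>k1f u\<bar> < 1"
proof -
  have u: "-1 < u" "u \<le> 1" using assms by auto
  have au: "-1 < \<bar>u\<bar>" "\<bar>u\<bar> \<le> 1" using assms by auto
  have S: "(\<lambda>k. a1 k * u ^ k) sums k1f u" using k1_series[OF u] unfolding k1f_def .
  have SA: "(\<lambda>k. a1 k * \<bar>u\<bar> ^ k) sums k1f \<bar>u\<bar>" using k1_series[OF au] unfolding k1f_def .
  have S1: "(\<lambda>k. a1 k * 1 ^ k) sums k1f 1" using k1_series[of 1] unfolding k1f_def by simp
  have le: "k1f u \<le> k1f \<bar>u\<bar>"
    by (rule sums_le[OF _ S SA]) (auto intro!: mult_left_mono a1_nonneg simp: power_abs[symmetric])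
  have ge: "- k1f \<bar>u\<bar> \<le> k1f u"
  proof (rule sums_le[OF _ sums_minus[OF SA] S])
    fix k
    have "- (u ^ k) \<le> \<bar>u\<bar> ^ k" by (metis abs_ge_minus_self power_abs)
    then have "- (\<bar>u\<bar> ^ k) \<le> u ^ k" by linarith
    then show "- (a1 k * \<bar>u\<bar> ^ k) \<le> a1 k * u ^ k"
      using a1_nonneg[of k] by (metis minus_mult_right mult_left_mono)
  qed
  have D: "(\<lambda>k. a1 k * 1 ^ k - a1 k * \<bar>u\<bar> ^ k) sums (k1f 1 - k1f \<bar>u\<bar>)"
    by (rule sums_diff[OF S1 SA])
  have "0 < (\<Sum>k. a1 k * 1 ^ k - a1 k * \<bar>u\<bar> ^ k)"
  proof (rule suminf_pos2[of _ 1])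
    show "summable (\<lambda>k. a1 k * 1 ^ k - a1 k * \<bar>u\<bar> ^ k)" using D by (simp add: sums_iff)
    show "0 \<le> a1 k * 1 ^ k - a1 k * \<bar>u\<bar> ^ k" for k
      using a1_nonneg[of k] assms by (simp add: algebra_simps mult_left_le power_le_one)
    have "ha 1 / pi \<ge> 0" using ha_nonneg[of 1] by simp
    then have "a1 1 > 0" unfolding a1_def by simp
    then show "0 < a1 1 * 1 ^ 1 - a1 1 * \<bar>u\<bar> ^ 1" using assms by simp
  qed
  then have "k1f \<bar>u\<bar> < 1" using D k1f_one by (simp add: sums_iff)
  then show ?thesis using le ge by auto
qed


definition k0f :: "real \<Rightarrow> real" where
  "k0f u = (1 / pi) * (pi - arccos u)"

lemma psd_prod: "finite S \<Longrightarrow> (\<forall>s\<in>S. psd n (M s)) \<Longrightarrow> psd n (\<lambda>i j. \<Prod>s\<in>S. M s i j)"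
proof (induction S rule: finite_induct)
  case empty then show ?case using psd_ones by simp
next
  case (insert x F)
  then show ?case using schur[of n "M x" "\<lambda>i j. \<Prod>s\<in>F. M s i j"] by simp
qed

lemma Q_sumM: "Q n (\<lambda>i j. \<Sum>r\<in>R. M r i j) c = (\<Sum>r\<in>R. Q n (M r) c)"
  unfolding Q_def by (simp add: sum_distrib_left sum.swap[of _ R])

lemma Q_scaleN: "Q n (\<lambda>i j. N i * N j * F i j) c = Q n F (\<lambda>i. c i * N i)"
  unfolding Q_def by (simp add: mult_ac)

lemma kernel_main:
  fixes G :: "nat \<Rightarrow> nat \<Rightarrow> real" and N :: "nat \<Rightarrow> real"
  assumes G: "psd n G" and Gd: "\<forall>i<n. G i i = 1" and Go: "\<forall>i<n. \<forall>j<n. i \<noteq> j \<longrightarrow> \<bar>G i j\<bar> < 1"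
    and L: "L \<ge> 1" and Np: "\<forall>i<n. N i > 0"
    and c: "\<exists>i<n. c i \<noteq> 0"
  shows "Q n (\<lambda>i j. N i * N j * (\<Sum>r = 0..L. (k1f ^^ r) (G i j) *
            (\<Prod>s\<in>{r..<L}. k0f ((k1f ^^ s) (G i j)))) + 1) c > 0"
proof -
  define Bm where "Bm = (\<lambda>s i j. (k1f ^^ s) (G i j))"
  have inv: "psd n (Bm s) \<and> (\<forall>i<n. Bm s i i = 1) \<and> (\<forall>i<n. \<forall>j<n. i \<noteq> j \<longrightarrow> \<bar>Bm s i j\<bar> < 1)" for s
  proof (induction s)
    case 0 then show ?case using G Gd Go by (simp add: Bm_def)
  next
    case (Suc s)
    then have P: "psd n (Bm s)" and D: "\<forall>i<n. Bm s i i = 1"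
      and O: "\<forall>i<n. \<forall>j<n. i \<noteq> j \<longrightarrow> \<bar>Bm s i j\<bar> < 1" by auto
    have BS: "Bm (Suc s) i j = k1f (Bm s i j)" for i j by (simp add: Bm_def)
    have rng: "-1 < Bm s i j \<and> Bm s i j \<le> 1" if "i < n" "j < n" for i j
      using D O that by (cases "i = j") (auto simp: abs_less_iff less_imp_le)
    have "psd n (Bm (Suc s))"
    proof (rule psd_series[OF P])
      show "\<forall>k. 0 \<le> a1 k" using a1_nonneg by simp
      show "\<forall>i<n. \<forall>j<n. (\<lambda>k. a1 k * Bm s i j ^ k) sums Bm (Suc s) i j"
        using rng k1_series unfolding BS k1f_def by auto
    qed
    moreover have "\<forall>i<n. Bm (Suc s) i i = 1" using D k1f_one BS by simp
    moreover have "\<forall>i<n. \<forall>j<n. i \<noteq> j \<longrightarrow> \<bar>Bm (Suc s) i j\<bar> < 1" using O k1f_lt BS by simp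
    ultimately show ?case by blast
  qed
  define Cm where "Cm = (\<lambda>s i j. k0f (Bm s i j))"
  have Cser: "\<forall>i<n. \<forall>j<n. (\<lambda>k. a0 k * Bm s i j ^ k) sums Cm s i j" for s
  proof (intro allI impI)
    fix i j assume "i < n" "j < n"
    then have "-1 < Bm s i j \<and> Bm s i j \<le> 1" using inv[of s] by (cases "i = j") (auto simp: abs_less_iff less_imp_le)
    then show "(\<lambda>k. a0 k * Bm s i j ^ k) sums Cm s i j"
      using k0_series unfolding Cm_def k0f_def by auto
  qed
  have Cpsd: "psd n (Cm s)" for s
    by (rule psd_series[OF conjunct1[OF inv[of s]] _ Cser]) (use a0_nonneg in auto)
  have Cspd: "\<exists>e>0. spd n (Cm s) e" for s
    by (rule spd_series[OF conjunct1[OF inv[of s]] _ _ _ _ Cser]) (use inv[of s] a0_nonneg a0_inf in auto)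
  define T where "T = (\<lambda>r i j. Bm r i j * (\<Prod>s\<in>{r..<L}. Cm s i j))"
  have Tpsd: "psd n (T r)" for r
    unfolding T_def using schur[OF conjunct1[OF inv[of r]] psd_prod[of "{r..<L}" n Cm]] Cpsd by auto
  obtain e where e: "e > 0" "spd n (Cm (L - 1)) e" using Cspd by blast
  have TL: "T (L - 1) = (\<lambda>i j. Bm (L - 1) i j * Cm (L - 1) i j)"
  proof -
    have "{L - 1..<L} = {L - 1}" using L by auto
    then show ?thesis unfolding T_def by simp
  qed
  have Tspd: "spd n (T (L - 1)) e"
    unfolding TL
    by (rule schur_strict) (use inv[of "L - 1"] Cpsd[of "L - 1"] e in \<open>auto simp: psd_def\<close>)
  define F where "F = (\<lambda>i j. \<Sum>r = 0..L. T r i j)"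
  have QF: "Q n F d \<ge> e * (\<Sum>i<n. d i ^ 2)" for d
  proof -
    have "Q n F d = (\<Sum>r = 0..L. Q n (T r) d)" unfolding F_def by (rule Q_sumM)
    also have "\<dots> \<ge> Q n (T (L - 1)) d"
      by (rule member_le_sum) (use Tpsd L in \<open>auto simp: psd_def\<close>)
    finally show ?thesis using Tspd unfolding spd_def by (meson order_trans)
  qed
  have eqK: "(\<lambda>i j. N i * N j * (\<Sum>r = 0..L. (k1f ^^ r) (G i j) *
            (\<Prod>s\<in>{r..<L}. k0f ((k1f ^^ s) (G i j)))) + 1) = (\<lambda>i j. N i * N j * F i j + 1)"
    unfolding F_def T_def Cm_def Bm_def by simp
  have "Q n (\<lambda>i j. N i * N j * F i j + 1) c = Q n F (\<lambda>i. c i * N i) + Q n (\<lambda>i j. 1) c"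
    by (simp only: Q_addM Q_scaleN)
  moreover have "Q n (\<lambda>i j. 1) c \<ge> 0" using psd_ones unfolding psd_def by blast
  moreover have "Q n F (\<lambda>i. c i * N i) \<ge> e * (\<Sum>i<n. (c i * N i) ^ 2)" by (rule QF)
  moreover have "(\<Sum>i<n. (c i * N i) ^ 2) > 0"
  proof -
    obtain i where i: "i < n" "c i \<noteq> 0" using c by blast
    moreover have "N i > 0" using Np i by blast
    ultimately have "(c i * N i) ^ 2 > 0" by simp
    moreover have "(c i * N i) ^ 2 \<le> (\<Sum>i<n. (c i * N i) ^ 2)"
      by (rule member_le_sum) (use i in auto)
    ultimately show ?thesis by linarith
  qed
  moreover have "e * (\<Sum>i<n. (c i * N i) ^ 2) > 0" using e(1) \<open>(\<Sum>i<n. (c i * N i) ^ 2) > 0\<close> by (rule mult_pos_pos)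
  ultimately have "Q n (\<lambda>i j. N i * N j * F i j + 1) c > 0" by linarith
  then show ?thesis unfolding eqK .
qed


lemma lagrange:
  fixes p q :: "nat \<Rightarrow> real"
  shows "2 * ((\<Sum>l\<in>M. p l^2) * (\<Sum>l\<in>M. q l^2) - (\<Sum>l\<in>M. p l * q l)^2)
         = (\<Sum>a\<in>M. \<Sum>b\<in>M. (p a * q b - p b * q a)^2)"
proof -
  have "(\<Sum>a\<in>M. \<Sum>b\<in>M. (p a * q b - p b * q a)^2) =
        (\<Sum>a\<in>M. \<Sum>b\<in>M. p a^2 * q b^2) + (\<Sum>a\<in>M. \<Sum>b\<in>M. p b^2 * q a^2)
        - 2 * (\<Sum>a\<in>M. \<Sum>b\<in>M. (p a * q a) * (p b * q b))"
    by (simp add: power2_eq_square algebra_simps sum.distrib sum_subtractf sum_distrib_left)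
  also have "(\<Sum>a\<in>M. \<Sum>b\<in>M. p a^2 * q b^2) = (\<Sum>l\<in>M. p l^2) * (\<Sum>l\<in>M. q l^2)"
    by (simp add: sum_product)
  also have "(\<Sum>a\<in>M. \<Sum>b\<in>M. p b^2 * q a^2) = (\<Sum>l\<in>M. p l^2) * (\<Sum>l\<in>M. q l^2)"
    by (simp add: sum_product sum.swap[of "\<lambda>a b. p b^2 * q a^2"] mult.commute)
  also have "(\<Sum>a\<in>M. \<Sum>b\<in>M. (p a * q a) * (p b * q b)) = (\<Sum>l\<in>M. p l * q l)^2"
    by (simp add: sum_product power2_eq_square)
  finally show ?thesis by simp
qed

lemma strict_cs:
  fixes p q :: "nat \<Rightarrow> real"
  assumes M: "finite M" and a: "a \<in> M" and b: "b \<in> M" and ne: "p a * q b \<noteq> p b * q a"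
  shows "(\<Sum>l\<in>M. p l * q l)^2 < (\<Sum>l\<in>M. p l^2) * (\<Sum>l\<in>M. q l^2)"
proof -
  have "(p a * q b - p b * q a)^2 > 0" using ne by simp
  also have "(p a * q b - p b * q a)^2 \<le> (\<Sum>b\<in>M. (p a * q b - p b * q a)^2)"
    by (rule member_le_sum) (use b M in auto)
  also have "\<dots> \<le> (\<Sum>a\<in>M. \<Sum>b\<in>M. (p a * q b - p b * q a)^2)"
    by (rule member_le_sum[where f = "\<lambda>a. \<Sum>b\<in>M. (p a * q b - p b * q a)^2"])
       (use a M in \<open>auto intro: sum_nonneg\<close>)
  also have "\<dots> = 2 * ((\<Sum>l\<in>M. p l^2) * (\<Sum>l\<in>M. q l^2) - (\<Sum>l\<in>M. p l * q l)^2)"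
    by (rule lagrange[symmetric])
  finally show ?thesis by simp
qed

lemma kappa0_eq: "kappa0 = k0f" by (rule ext) (simp add: kappa0_def k0f_def)
lemma kappa1_eq: "kappa1 = k1f" by (rule ext) (simp add: kappa1_def k1f_def)

lemma tilde_dim[simp]: "dim_vec (tilde x) = dim_vec x + 1" by (simp add: tilde_def)
lemma tilde_idx: "l < dim_vec x + 1 \<Longrightarrow> tilde x $ l = (if l < dim_vec x then x $ l else 1)"
  by (simp add: tilde_def)

lemma tilde_sq_pos: "tilde x \<bullet> tilde x \<ge> 1"
proof -
  have "tilde x \<bullet> tilde x = (\<Sum>l\<in>{0..<dim_vec x + 1}. (tilde x $ l)^2)"
    by (simp add: scalar_prod_def power2_eq_square)
  also have "\<dots> \<ge> (tilde x $ dim_vec x)^2"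
    by (rule member_le_sum) auto
  also have "(tilde x $ dim_vec x)^2 = 1" by (simp add: tilde_idx)
  finally show ?thesis .
qed

theorem proposition9:
  fixes L d :: nat and xs :: "real vec list"
  assumes "L \<ge> 2"
    and "\<forall>x\<in>set xs. dim_vec x = d"
    and "distinct xs"
  shows "\<forall>k. eigenvalue (gram_NT L xs) k \<longrightarrow> k > 0"
proof (intro allI impI)
  fix k assume ev: "eigenvalue (gram_NT L xs) k"
  define n where "n = length xs"
  define m where "m = d + 1"
  define tx where "tx = (\<lambda>i. tilde (xs ! i))"
  define nv where "nv = (\<lambda>i. vnorm (tx i))"
  define G where "G = (\<lambda>i j. (tx i \<bullet> tx j) / (nv i * nv j))"
  have dimx: "dim_vec (xs ! i) = d" if "i < n" for i
    using assms(2) that unfolding n_def by auto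
  have dimt: "dim_vec (tx i) = m" if "i < n" for i
    using dimx[OF that] unfolding tx_def m_def by simp
  have txl: "tx i $ l = (if l < d then xs ! i $ l else 1)" if "i < n" "l < m" for i l
    using tilde_idx[of l "xs ! i"] dimx that unfolding tx_def m_def by simp
  have sq: "tx i \<bullet> tx i \<ge> 1" for i unfolding tx_def by (rule tilde_sq_pos)
  have nvpos: "nv i > 0" for i using sq[of i] unfolding nv_def vnorm_def by simp
  have nvsq: "nv i * nv i = tx i \<bullet> tx i" for i
    using sq[of i] unfolding nv_def vnorm_def by simp
  have comm: "tx i \<bullet> tx j = tx j \<bullet> tx i" if "i < n" "j < n" for i j
  proof -
    have "tx i \<in> carrier_vec m" "tx j \<in> carrier_vec m"
      using dimt[OF that(1)] dimt[OF that(2)] by (simp_all only: carrier_vec_def mem_Collect_eq)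
    then show ?thesis by (rule comm_scalar_prod)
  qed
  define w where "w = (\<lambda>i l. tx i $ l / nv i)"
  have Gw: "G i j = (\<Sum>l\<in>{0..<m}. w i l * w j l)" if "i < n" "j < n" for i j
  proof -
    have "G i j = (\<Sum>l\<in>{0..<m}. tx i $ l * tx j $ l) / (nv i * nv j)"
      unfolding G_def scalar_prod_def using dimt[OF that(2)] by simp
    also have "\<dots> = (\<Sum>l\<in>{0..<m}. w i l * w j l)"
      unfolding w_def sum_divide_distrib by (rule sum.cong) auto
    finally show ?thesis .
  qed
  have Gpsd: "psd n G" unfolding psd_def
  proof
    show "symk n G" unfolding symk_def G_def using comm by (simp add: mult.commute)
    show "\<forall>c. 0 \<le> Q n G c"
    proof
      fix c
      have "Q n G c = (\<Sum>i<n. \<Sum>j<n. \<Sum>l\<in>{0..<m}. (c i * w i l) * (c j * w j l))"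
        unfolding Q_def by (intro sum.cong refl) (simp add: Gw sum_distrib_left mult_ac)
      also have "\<dots> = (\<Sum>i<n. \<Sum>l\<in>{0..<m}. \<Sum>j<n. (c i * w i l) * (c j * w j l))"
        by (intro sum.cong refl sum.swap)
      also have "\<dots> = (\<Sum>l\<in>{0..<m}. \<Sum>i<n. \<Sum>j<n. (c i * w i l) * (c j * w j l))"
        by (rule sum.swap)
      also have "\<dots> = (\<Sum>l\<in>{0..<m}. (\<Sum>i<n. c i * w i l) * (\<Sum>j<n. c j * w j l))"
        by (simp add: sum_product)
      also have "\<dots> \<ge> 0" by (intro sum_nonneg) (simp add: zero_le_square)
      finally show "0 \<le> Q n G c" .
    qed
  qed
  have Gd: "\<forall>i<n. G i i = 1"
  proof (intro allI impI)
    fix i assume "i < n"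
    have "tx i \<bullet> tx i \<noteq> 0" using sq[of i] by linarith
    then show "G i i = 1" unfolding G_def nvsq by simp
  qed
  have Go: "\<forall>i<n. \<forall>j<n. i \<noteq> j \<longrightarrow> \<bar>G i j\<bar> < 1"
  proof (intro allI impI)
    fix i j assume i: "i < n" and j: "j < n" and ij: "i \<noteq> j"
    have ne: "xs ! i \<noteq> xs ! j" using assms(3) i j ij unfolding n_def by (simp add: nth_eq_iff_index_eq)
    have "\<exists>l<d. xs ! i $ l \<noteq> xs ! j $ l"
    proof (rule ccontr)
      assume "\<not> ?thesis"
      then have "xs ! i = xs ! j" using dimx i j by (intro eq_vecI) auto
      with ne show False by simp
    qed
    then obtain l where l: "l < d" "xs ! i $ l \<noteq> xs ! j $ l" by blast
    define p where "p = (\<lambda>l. tx i $ l)"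
    define q where "q = (\<lambda>l. tx j $ l)"
    have lm: "l < m" "d < m" using l unfolding m_def by auto
    have "p l * q d \<noteq> p d * q l" using l lm txl[OF i] txl[OF j] unfolding p_def q_def by simp
    then have cs: "(\<Sum>l\<in>{0..<m}. p l * q l)^2 < (\<Sum>l\<in>{0..<m}. p l^2) * (\<Sum>l\<in>{0..<m}. q l^2)"
      using lm by (intro strict_cs) auto
    have e1: "tx i \<bullet> tx j = (\<Sum>l\<in>{0..<m}. p l * q l)"
      unfolding scalar_prod_def p_def q_def using dimt[OF j] by simp
    have e2: "tx i \<bullet> tx i = (\<Sum>l\<in>{0..<m}. p l^2)"
      unfolding scalar_prod_def p_def using dimt[OF i] by (simp add: power2_eq_square)
    have e3: "tx j \<bullet> tx j = (\<Sum>l\<in>{0..<m}. q l^2)"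
      unfolding scalar_prod_def q_def using dimt[OF j] by (simp add: power2_eq_square)
    have "(nv i * nv j)^2 = (nv i * nv i) * (nv j * nv j)" by (simp add: power2_eq_square mult_ac)
    also have "\<dots> = (\<Sum>l\<in>{0..<m}. p l^2) * (\<Sum>l\<in>{0..<m}. q l^2)"
      using nvsq[of i] nvsq[of j] e2 e3 by simp
    finally have "(tx i \<bullet> tx j)^2 < (nv i * nv j)^2" using cs e1 by simp
    then have sq2: "\<bar>tx i \<bullet> tx j\<bar>^2 < (nv i * nv j)^2" by (simp only: power2_abs)
    have pos: "nv i * nv j > 0" using nvpos[of i] nvpos[of j] by (rule mult_pos_pos)
    have ab: "\<bar>tx i \<bullet> tx j\<bar> < nv i * nv j"
      by (rule power2_less_imp_less[OF sq2]) (use pos in linarith)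
    have "\<bar>G i j\<bar> = \<bar>tx i \<bullet> tx j\<bar> / (nv i * nv j)"
      unfolding G_def using pos by (simp add: abs_divide)
    then show "\<bar>G i j\<bar> < 1" using ab pos by simp
  qed
  obtain v where v: "v \<in> carrier_vec (dim_row (gram_NT L xs))" "v \<noteq> 0\<^sub>v (dim_row (gram_NT L xs))"
    "gram_NT L xs *\<^sub>v v = k \<cdot>\<^sub>v v"
    using ev unfolding eigenvalue_def eigenvector_def by blast
  have dr: "dim_row (gram_NT L xs) = n" unfolding gram_NT_def n_def by simp
  have dv: "dim_vec v = n" using carrier_vecD[OF v(1)] dr by simp
  have cnz: "\<exists>i<n. v $ i \<noteq> 0"
  proof (rule ccontr)
    assume nz: "\<not> ?thesis"
    have "v = 0\<^sub>v n"
    proof (rule eq_vecI)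
      fix i assume "i < dim_vec (0\<^sub>v n)"
      then have "i < n" by simp
      then show "v $ i = 0\<^sub>v n $ i" using nz by simp
    next
      show "dim_vec v = dim_vec (0\<^sub>v n)" using dv by simp
    qed
    with v(2) dr show False by simp
  qed
  define K where "K = (\<lambda>i j. nv i * nv j * (\<Sum>r = 0..L. (k1f ^^ r) (G i j) *
            (\<Prod>s\<in>{r..<L}. k0f ((k1f ^^ s) (G i j)))) + 1)"
  have Kent: "gram_NT L xs $$ (i, j) = K i j" if "i < n" "j < n" for i j
  proof -
    have "gram_NT L xs $$ (i, j) = KNT L (xs ! i) (xs ! j)"
      using that unfolding gram_NT_def n_def by simp
    also have "\<dots> = K i j"
      unfolding KNT_def Let_def K_def G_def nv_def tx_def kappa0_eq kappa1_eq ..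
    finally show ?thesis .
  qed
  have Qpos: "Q n K (\<lambda>i. v $ i) > 0"
    unfolding K_def
    by (rule kernel_main[OF Gpsd Gd Go]) (use assms(1) nvpos cnz in auto)
  have "v \<bullet> (gram_NT L xs *\<^sub>v v) = Q n K (\<lambda>i. v $ i)"
  proof -
    have dc: "dim_col (gram_NT L xs) = n" unfolding gram_NT_def n_def by simp
    have rowi: "(gram_NT L xs *\<^sub>v v) $ i = (\<Sum>j<n. K i j * v $ j)" if i: "i < n" for i
    proof -
      have "(gram_NT L xs *\<^sub>v v) $ i = row (gram_NT L xs) i \<bullet> v" using i dr by simp
      also have "\<dots> = (\<Sum>j\<in>{0..<n}. row (gram_NT L xs) i $ j * v $ j)"
        unfolding scalar_prod_def dv ..
      also have "\<dots> = (\<Sum>j<n. K i j * v $ j)"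
        by (rule sum.cong) (auto simp: Kent i dr dc)
      finally show ?thesis .
    qed
    have dm: "dim_vec (gram_NT L xs *\<^sub>v v) = n" using dr by simp
    have "v \<bullet> (gram_NT L xs *\<^sub>v v) = (\<Sum>i\<in>{0..<n}. v $ i * (gram_NT L xs *\<^sub>v v) $ i)"
      unfolding scalar_prod_def dm ..
    also have "\<dots> = (\<Sum>i<n. v $ i * (\<Sum>j<n. K i j * v $ j))"
      by (rule sum.cong) (auto simp: rowi)
    finally have "v \<bullet> (gram_NT L xs *\<^sub>v v) = (\<Sum>i<n. v $ i * (\<Sum>j<n. K i j * v $ j))" .
    also have "\<dots> = Q n K (\<lambda>i. v $ i)" unfolding Q_def
      by (simp add: sum_distrib_left mult_ac)
    finally show ?thesis .
  qed
  moreover have "v \<bullet> (gram_NT L xs *\<^sub>v v) = k * (v \<bullet> v)" using v(3) dv by simp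
  moreover have "v \<bullet> v > 0"
  proof -
    obtain i where i: "i < n" "v $ i \<noteq> 0" using cnz by blast
    have "v \<bullet> v = (\<Sum>l<n. (v $ l)^2)" unfolding scalar_prod_def using dv
      by (simp add: atLeast0LessThan power2_eq_square)
    also have "\<dots> \<ge> (v $ i)^2" by (rule member_le_sum) (use i in auto)
    finally have "(v $ i)^2 \<le> v \<bullet> v" .
    moreover have "(v $ i)^2 > 0" using i by simp
    ultimately show ?thesis by linarith
  qed
  ultimately show "k > 0" using Qpos by (metis zero_less_mult_pos2)
qed


end
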